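(* Let $f:\mathbb{R}^n\to\mathbb{R}$ be continuously differentiable, let $s$ be a positive integer with $s\le n$, and let $\eta>0$. A point $\mathbf x\in\mathbb{R}^n$ is an $\eta$-stationary point of the problem $\min\{f(\mathbf x):\|\mathbf x\|_0\le s\}$ if and only if there exists $T\in\mathcal{T}(\mathbf x;\eta)$ with $F_\eta(\mathbf x;T)=0$. Furthermore, a point $\mathbf x\in\mathbb{R}^n$ satisfies the fixed-point equation $\mathbf x=\mathcal{P}_s(\mathbf x-\eta\nabla f(\mathbf x))$ (i.e. $\mathcal{P}_s(\mathbf x-\eta\nabla f(\mathbf x))=\{\mathbf x\}$) if and only if $F_\eta(\mathbf x;T)=0$ for every $T\in\mathcal{T}(\mathbf x;\eta)$.
   Context: $\|\mathbf x\|_0$ is the number of nonzero entries of $\mathbf x$; $\mathbf x$ is $s$-sparse if $\|\mathbf x\|_0\le s$; $\mathrm{supp}(\mathbf x)$ is the set of indices of nonzero entries. For $T\subseteq\{1,\dots,n\}$, $T^c=\{1,\dots,n\}\setminus T$, $\mathbf x_T$ is the subvector of $\mathbf x$ indexed by $T$, and $\nabla_T f(\mathbf x)=(\nabla f(\mathbf x))_T$. The hard-thresholding map is the set-valued map $\mathcal{P}_s(\mathbf x)=\mathrm{argmin}_{\mathbf z}\{\|\mathbf x-\mathbf z\|:\|\mathbf z\|_0\le s\}$ (Euclidean norm), i.e. the set of vectors obtained by keeping $s$ largest-magnitude entries of $\mathbf x$ and zeroing the rest. An $s$-sparse vector $\mathbf x^*$ is an $\eta$-stationary point if $\mathbf x^*\in\mathcal{P}_s(\mathbf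 x^*-\eta\nabla f(\mathbf x^* ))$. Define $\mathcal{T}(\mathbf x;\eta)=\{T\subseteq\{1,\dots,n\}: |T|=s,\ T\supseteq\mathrm{supp}(\mathbf z)\text{ for some }\mathbf z\in\mathcal{P}_s(\mathbf x-\eta\nabla f(\mathbf x))\}$, and for $T\in\mathcal{T}(\mathbf x;\eta)$ define $F_\eta(\mathbf x;T)=\begin{bmatrix}\nabla_T f(\mathbf x)\\ \mathbf x_{T^c}\end{bmatrix}\in\mathbb{R}^n$. *)

theory Defs
  imports "HOL-Analysis.Analysis"
begin

text \<open>Vectors in R^n are modelled as real^'n with n = CARD('n).\<close>

definition supp :: "real^'n \<Rightarrow> 'n set" where
  "supp x = {i. x $ i \<noteq> 0}"

definition l0norm :: "real^'n \<Rightarrow> nat" where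
  "l0norm x = card (supp x)"

definition Ps :: "nat \<Rightarrow> real^'n \<Rightarrow> (real^'n) set" where
  "Ps s x = {z. l0norm z \<le> s \<and> (\<forall>w. l0norm w \<le> s \<longrightarrow> norm (x - z) \<le> norm (x - w))}"

text \<open>g plays the role of the gradient of f.\<close>
definition eta_stationary :: "(real^'n \<Rightarrow> real^'n) \<Rightarrow> nat \<Rightarrow> real \<Rightarrow> real^'n \<Rightarrow> bool" where
  "eta_stationary g s \<eta> x \<longleftrightarrow> l0norm x \<le> s \<and> x \<in> Ps s (x - \<eta> *\<^sub>R g x)"

definition Tset :: "(real^'n \<Rightarrow> real^'n) \<Rightarrow> nat \<Rightarrow> real \<Rightarrow> real^'n \<Rightarrow> 'n set set" where
  "Tset g s \<eta> x = {T. card T = s \<and> (\<exists>z \<in> Ps s (x - \<eta> *\<^sub>R g x). supp z \<subseteq> T)}"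

definition Feta :: "(real^'n \<Rightarrow> real^'n) \<Rightarrow> real^'n \<Rightarrow> 'n set \<Rightarrow> real^'n" where
  "Feta g x T = (\<chi> i. if i \<in> T then g x $ i else x $ i)"

end

theory Submission
  imports Defs
begin

lemma supp_finite_card: "card (supp (x::real^'n)) \<le> CARD('n)"
  by (simp add: card_mono)

lemma sq_update:
  fixes y z :: "real^'n" and k :: 'n
  defines "w \<equiv> (\<chi> j. if j = k then y$k else z$j)"
  shows "inner (y - z) (y - z) = inner (y - w) (y - w) + (y$k - z$k)^2"
proof -
  have "inner (y - z) (y - z) = (\<Sum>i\<in>UNIV. (y$i - z$i)^2)"
    by (simp add: inner_vec_def power2_eq_square)
  also have "\<dots> = (y$k - z$k)^2 + (\<Sum>i\<in>UNIV - {k}. (y$i - z$i)^2)"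
    by (simp add: sum.remove[of UNIV k])
  also have "(\<Sum>i\<in>UNIV - {k}. (y$i - z$i)^2) = (\<Sum>i\<in>UNIV - {k}. (y$i - w$i)^2)"
    by (rule sum.cong) (auto simp: w_def)
  also have "\<dots> = (\<Sum>i\<in>UNIV. (y$i - w$i)^2)"
    by (simp add: sum.remove[of UNIV k] w_def)
  also have "\<dots> = inner (y - w) (y - w)"
    by (simp add: inner_vec_def power2_eq_square)
  finally show ?thesis by simp
qed

lemma opt_coord:
  fixes y z :: "real^'n"
  assumes "z \<in> Ps s y" "i \<in> supp z"
  shows "z$i = y$i"
proof -
  define w where "w = (\<chi> j. if j = i then y$i else z$j)"
  have "supp w \<subseteq> supp z" using assms(2) by (auto simp: supp_def w_def)
  hence "l0norm w \<le> l0norm z" unfolding l0norm_def by (simp add: card_mono)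
  with assms(1) have "norm (y - z) \<le> norm (y - w)" by (auto simp: Ps_def)
  hence "inner (y - z) (y - z) \<le> inner (y - w) (y - w)" by (simp add: norm_le)
  with sq_update[of y z i] have "(y$i - z$i)^2 \<le> 0" by (simp add: w_def)
  thus ?thesis by simp
qed

lemma opt_small:
  fixes y z :: "real^'n"
  assumes "z \<in> Ps s y" "l0norm z < s" "j \<notin> supp z"
  shows "y$j = 0"
proof -
  define w where "w = (\<chi> i. if i = j then y$j else z$i)"
  have "supp w \<subseteq> insert j (supp z)" by (auto simp: supp_def w_def)
  hence "card (supp w) \<le> card (insert j (supp z))" by (simp add: card_mono)
  also have "\<dots> = Suc (card (supp z))" using assms(3) by simp
  finally have "l0norm w \<le> s" using assms(2) by (simp add: l0norm_def)
  with assms(1) have "norm (y - z) \<le> norm (y - w)" by (auto simp: Ps_def)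
  hence "inner (y - z) (y - z) \<le> inner (y - w) (y - w)" by (simp add: norm_le)
  with sq_update[of y z j] have "(y$j - z$j)^2 \<le> 0" by (simp add: w_def)
  moreover have "z$j = 0" using assms(3) by (simp add: supp_def)
  ultimately show ?thesis by simp
qed

lemma extend_T:
  fixes A :: "'n::finite set"
  assumes "card A \<le> s" "s \<le> CARD('n)"
  obtains T where "A \<subseteq> T" "card T = s"
proof -
  have "card (UNIV - A) = CARD('n) - card A" by (simp add: card_Diff_subset)
  hence "s - card A \<le> card (UNIV - A)" using assms by simp
  then obtain T' where T': "T' \<subseteq> UNIV - A" "card T' = s - card A"
    by (metis obtain_subset_with_card_n)
  have "card (A \<union> T') = card A + card T'"
    using T' by (subst card_Un_disjoint) auto
  hence "card (A \<union> T') = s" using T' assms by simp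
  thus ?thesis using that by blast
qed

lemma closed_sparse: "closed {z::real^'n. l0norm z \<le> s}"
proof -
  let ?B = "\<lambda>T::'n set. {z::real^'n. \<forall>i. z $ i \<in> (if i \<in> T then UNIV else {0})}"
  have eq: "{z::real^'n. l0norm z \<le> s} = (\<Union>T\<in>{T. card T \<le> s}. ?B T)"
  proof (rule set_eqI, rule iffI)
    fix z :: "real^'n" assume "z \<in> {z. l0norm z \<le> s}"
    hence "card (supp z) \<le> s" by (simp add: l0norm_def)
    moreover have "z \<in> ?B (supp z)" by (simp add: supp_def)
    ultimately show "z \<in> (\<Union>T\<in>{T. card T \<le> s}. ?B T)" by blast
  next
    fix z :: "real^'n" assume "z \<in> (\<Union>T\<in>{T. card T \<le> s}. ?B T)"
    then obtain T where T: "card T \<le> s" "z \<in> ?B T" by blast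
    have "supp z \<subseteq> T"
    proof
      fix i assume "i \<in> supp z"
      hence "z $ i \<noteq> 0" by (simp add: supp_def)
      moreover have "z $ i \<in> (if i \<in> T then UNIV else {0})" using T(2) by blast
      ultimately show "i \<in> T" by (cases "i \<in> T") auto
    qed
    hence "card (supp z) \<le> card T" by (simp add: card_mono)
    thus "z \<in> {z. l0norm z \<le> s}" using T(1) by (simp add: l0norm_def)
  qed
  have "closed (?B T)" for T
    by (rule closed_vector_box) simp
  hence "closed (\<Union>T\<in>{T. card T \<le> s}. ?B T)"
    by (intro closed_Union) auto
  thus ?thesis unfolding eq .
qed

lemma Ps_nonempty: "Ps s (y::real^'n) \<noteq> {}"
proof -
  let ?S = "{z::real^'n. l0norm z \<le> s}"
  have "(0::real^'n) \<in> ?S" by (simp add: l0norm_def supp_def)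
  hence ne: "?S \<noteq> {}" by blast
  obtain z where z: "z \<in> ?S" "\<And>w. w \<in> ?S \<Longrightarrow> dist y z \<le> dist y w"
    by (rule distance_attains_inf[OF closed_sparse ne, of y]) blast
  have "z \<in> Ps s y" unfolding Ps_def
  proof (intro CollectI conjI allI impI)
    show "l0norm z \<le> s" using z(1) by simp
    fix w :: "real^'n" assume "l0norm w \<le> s"
    hence "dist y z \<le> dist y w" using z(2) by simp
    thus "norm (y - z) \<le> norm (y - w)" by (simp add: dist_norm)
  qed
  thus ?thesis by blast
qed

lemma pointwise_cmp:
  fixes x y z :: "real^'n"
  assumes "supp z \<subseteq> T" "supp x \<subseteq> T" "\<forall>i\<in>T. x$i = y$i"
  shows "norm (y - x) \<le> norm (y - z)"
    and "norm (y - x) = norm (y - z) \<Longrightarrow> z = x"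
proof -
  have pw: "(y$i - x$i)^2 \<le> (y$i - z$i)^2" for i
  proof (cases "i \<in> T")
    case True thus ?thesis using assms by simp
  next
    case False
    hence "i \<notin> supp z" "i \<notin> supp x" using assms(1,2) by blast+
    thus ?thesis by (simp add: supp_def)
  qed
  have ex: "inner (y - x) (y - x) = (\<Sum>i\<in>UNIV. (y$i - x$i)^2)"
           "inner (y - z) (y - z) = (\<Sum>i\<in>UNIV. (y$i - z$i)^2)"
    by (simp_all add: inner_vec_def power2_eq_square)
  show "norm (y - x) \<le> norm (y - z)"
    unfolding norm_le ex by (intro sum_mono pw)
  assume eqn: "norm (y - x) = norm (y - z)"
  hence "inner (y - x) (y - x) = inner (y - z) (y - z)"
    by (metis norm_eq)
  hence S: "(\<Sum>i\<in>UNIV. (y$i - x$i)^2) = (\<Sum>i\<in>UNIV. (y$i - z$i)^2)" using ex by simp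
  have all: "(y$i - x$i)^2 = (y$i - z$i)^2" for i
  proof (rule ccontr)
    assume "(y$i - x$i)^2 \<noteq> (y$i - z$i)^2"
    hence "(y$i - x$i)^2 < (y$i - z$i)^2" using pw[of i] by simp
    hence "(\<Sum>i\<in>UNIV. (y$i - x$i)^2) < (\<Sum>i\<in>UNIV. (y$i - z$i)^2)"
      by (intro sum_strict_mono_ex1) (auto intro: pw)
    thus False using S by simp
  qed
  show "z = x"
  proof (rule vec_eq_iff[THEN iffD2], rule allI)
    fix i show "z$i = x$i"
    proof (cases "i \<in> T")
      case True
      hence "(y$i - z$i)^2 = 0" using all[of i] assms by simp
      thus ?thesis using True assms by simp
    next
      case False
      hence "i \<notin> supp z" "i \<notin> supp x" using assms(1,2) by blast+
      thus ?thesis by (simp add: supp_def)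
    qed
  qed
qed

lemma stat_to_F:
  fixes g :: "real^'n \<Rightarrow> real^'n" and x :: "real^'n"
  assumes xP: "x \<in> Ps s (x - \<eta> *\<^sub>R g x)" and T: "card T = s" "supp x \<subseteq> T" and eta: "0 < \<eta>"
  shows "Feta g x T = 0"
proof -
  have "g x $ i = 0" if iT: "i \<in> T" for i
  proof (cases "i \<in> supp x")
    case True
    from opt_coord[OF xP True] eta show ?thesis by simp
  next
    case False
    have "l0norm x < s"
    proof (rule ccontr)
      assume "\<not> l0norm x < s"
      hence "card T \<le> card (supp x)" using T by (simp add: l0norm_def)
      hence "supp x = T" using T by (metis card_seteq finite)
      thus False using False iT by simp
    qed
    from opt_small[OF xP this False] False eta show ?thesis by (simp add: supp_def)
  qed
  moreover have "x $ i = 0" if "i \<notin> T" for i using T that by (auto simp: supp_def)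
  ultimately show ?thesis by (simp add: Feta_def vec_eq_iff)
qed

lemma F_props:
  fixes g :: "real^'n \<Rightarrow> real^'n" and x :: "real^'n"
  assumes "Feta g x T = 0" "0 < \<eta>"
  shows "supp x \<subseteq> T" "\<forall>i\<in>T. g x $ i = 0"
  using assms by (auto simp: Feta_def vec_eq_iff supp_def split: if_splits)

theorem lemma4:
  fixes f :: "real^'n \<Rightarrow> real" and g :: "real^'n \<Rightarrow> real^'n"
    and s :: nat and \<eta> :: real and x :: "real^'n"
  assumes grad: "\<And>y. (f has_derivative (\<lambda>h. g y \<bullet> h)) (at y)"
    and C1: "continuous_on UNIV g"
    and s_pos: "0 < s" and s_le: "s \<le> CARD('n)"
    and eta_pos: "0 < \<eta>"
  shows "(eta_stationary g s \<eta> x \<longleftrightarrow> (\<exists>T \<in> Tset g s \<eta> x. Feta g x T = 0))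
       \<and> (Ps s (x - \<eta> *\<^sub>R g x) = {x} \<longleftrightarrow> (\<forall>T \<in> Tset g s \<eta> x. Feta g x T = 0))"
proof -
  define y where "y = x - \<eta> *\<^sub>R g x"
  have fwd: "Feta g x T = 0" if xP: "x \<in> Ps s y" and T: "T \<in> Tset g s \<eta> x"
    and sx: "supp x \<subseteq> T" for T
    using stat_to_F[of x s \<eta> g T] xP[unfolded y_def] sx eta_pos T by (simp add: Tset_def)
  have ext: "\<exists>T. supp x \<subseteq> T \<and> T \<in> Tset g s \<eta> x" if xP: "x \<in> Ps s y"
  proof -
    from xP have "card (supp x) \<le> s" by (simp add: Ps_def l0norm_def)
    then obtain T where "supp x \<subseteq> T" "card T = s" using extend_T s_le by blast
    thus ?thesis using xP by (auto simp: Tset_def y_def)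
  qed
  have bwd: "x \<in> Ps s y" if T: "T \<in> Tset g s \<eta> x" "Feta g x T = 0" for T
  proof -
    from T obtain z where z: "z \<in> Ps s y" "supp z \<subseteq> T" "card T = s" by (auto simp: Tset_def y_def)
    note FP = F_props[OF T(2) eta_pos]
    have le: "norm (y - x) \<le> norm (y - z)"
    proof -
      have "\<forall>i\<in>T. x$i = y$i" using FP(2) by (simp add: y_def)
      thus ?thesis using pointwise_cmp(1)[OF z(2) FP(1)] by blast
    qed
    have "card (supp x) \<le> card T" using FP(1) by (simp add: card_mono)
    hence "l0norm x \<le> s" using z by (simp add: l0norm_def)
    thus ?thesis using le z(1) by (force simp: Ps_def)
  qed
  have P1: "eta_stationary g s \<eta> x \<longleftrightarrow> (\<exists>T \<in> Tset g s \<eta> x. Feta g x T = 0)"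
  proof
    assume "eta_stationary g s \<eta> x"
    hence xP: "x \<in> Ps s y" by (simp add: eta_stationary_def y_def)
    with ext fwd show "\<exists>T \<in> Tset g s \<eta> x. Feta g x T = 0" by blast
  next
    assume "\<exists>T \<in> Tset g s \<eta> x. Feta g x T = 0"
    then obtain T where "T \<in> Tset g s \<eta> x" "Feta g x T = 0" by blast
    hence "x \<in> Ps s y" by (rule bwd)
    thus "eta_stationary g s \<eta> x" by (simp add: eta_stationary_def y_def Ps_def)
  qed
  have P2: "Ps s y = {x} \<longleftrightarrow> (\<forall>T \<in> Tset g s \<eta> x. Feta g x T = 0)"
  proof
    assume E: "Ps s y = {x}"
    show "\<forall>T \<in> Tset g s \<eta> x. Feta g x T = 0"
    proof
      fix T assume T: "T \<in> Tset g s \<eta> x"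
      hence "supp x \<subseteq> T" using E by (auto simp: Tset_def y_def)
      thus "Feta g x T = 0" using fwd[OF _ T] E by simp
    qed
  next
    assume A: "\<forall>T \<in> Tset g s \<eta> x. Feta g x T = 0"
    obtain z0 where z0: "z0 \<in> Ps s y" using Ps_nonempty by blast
    from z0 have "card (supp z0) \<le> s" by (simp add: Ps_def l0norm_def)
    then obtain T0 where "supp z0 \<subseteq> T0" "card T0 = s" using extend_T s_le by blast
    hence T0: "T0 \<in> Tset g s \<eta> x" using z0 by (auto simp: Tset_def y_def)
    have xP: "x \<in> Ps s y" using bwd[OF T0] A T0 by blast
    have "z = x" if zP: "z \<in> Ps s y" for z
    proof -
      from zP have "card (supp z) \<le> s" by (simp add: Ps_def l0norm_def)
      then obtain T where sT: "supp z \<subseteq> T" "card T = s" using extend_T s_le by blast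
      hence T: "T \<in> Tset g s \<eta> x" using zP by (auto simp: Tset_def y_def)
      note FP = F_props[OF A[rule_format, OF T] eta_pos]
      have "norm (y - x) \<le> norm (y - z)" "norm (y - z) \<le> norm (y - x)"
        using zP xP by (auto simp: Ps_def)
      hence "norm (y - x) = norm (y - z)" by simp
      moreover have "\<forall>i\<in>T. x$i = y$i" using FP(2) by (simp add: y_def)
      ultimately show "z = x" using pointwise_cmp(2)[OF sT(1) FP(1)] by blast
    qed
    thus "Ps s y = {x}" using xP by blast
  qed
  show ?thesis using P1 P2 by (simp add: y_def)
qed

end
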